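(* Let $w\in(1,\infty)$ and $\delta\in(0,1)$. Define the CI reporting procedure $\Phi$ by: for input $(S,\mathbf C)$ with $S\subseteq[K]$, $\mathbf C\in\mathrm{ECI}_K$, if $(S,\mathbf C)\in\Sigma(w)$ report $C_i(w\delta|S|/K)$ for $i\in S$, and otherwise report $C_i(\delta|S|/K)$ for $i\in S$. Then for every random selection $\mathcal S$, e-value families $E_1,\dots,E_K$ and true parameter $\boldsymbol\theta$, $$\mathrm{FCR}(\Phi)=\mathbb{E}\left[\frac{\sum_{i\in\mathcal S}\mathbf 1\{\theta_i\notin\Phi(\mathcal S,\mathbf C^{\mathbf E})_i\}}{|\mathcal S|\vee1}\right]\le\delta .$$
   Context: Fix $K$ and parameter spaces $\Theta_1,\dots,\Theta_K$; the probability space carries a random variable that is standard uniform under every parameter. An e-value family for $\Theta_i$ is $(E_i(\theta))_{\theta\in\Theta_i}$ with $E_i(\theta)\ge0$ and $\mathbb{E}[E_i(\theta)]\le1$ whenever $\theta$ is the true value of $\theta_i$; $C^{\mathbf E}_i(\alpha)=\{\theta\in\Theta_i:E_i(\theta)<1/\alpha\}$ ($1/0=\infty$). $\mathrm{ECI}_K$ is the set of tuples $\mathbf C=(C_1,\dots,C_K)$ where each $C_i:[0,1]\to2^{\Theta_i}$ is nonincreasing with $C_i(\alpha)=\bigcup_{\beta>\alpha}C_i(\beta)$ for $\alpha\in[0,1)$ (the possible realizations of such e-CIs). For $\mathbf C\in\mathrm{ECI}_K$ let $t_i(\theta)=\sup\{1/\alpha:\alpha\in[0,1),\theta\notin C_i(\alpha)\}$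 (with $\sup\emptyset=1$). For $S\ne\emptyset,[K]$ let $\gamma(S,\mathbf C)=\sum_{i\in S}\sup_{\theta\in\Theta_i}t_i(\theta)$, $\lambda(S,\mathbf C)=\sum_{i\in[K]\setminus S}\inf_{\theta\in\Theta_i}\big(t_i(\theta)\mathbf 1\{t_i(\theta)>1\}\big)$, and $v(S,\mathbf C)=1+\lambda(S,\mathbf C)/\gamma(S,\mathbf C)$ with $\infty/\infty=0$. $\Sigma(w)=\{(S,\mathbf C): S\ne\emptyset,[K],\ v(S,\mathbf C)\ge w\}$. A random selection $\mathcal S$ is any $2^{[K]}$-valued random variable, and $\Phi$ is applied to $(\mathcal S,\mathbf C^{\mathbf E})$. *)

theory Defs
  imports "HOL-Probability.Probability"
begin

text \<open>All parameters live in one ambient type 'a;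
  the i-th parameter space is Theta i :: 'a set.\<close>

definition ECI :: "nat \<Rightarrow> (nat \<Rightarrow> 'a set) \<Rightarrow> (nat \<Rightarrow> real \<Rightarrow> 'a set) \<Rightarrow> bool" where
  "ECI K Theta C \<longleftrightarrow>
     (\<forall>i\<in>{1..K}.
        (\<forall>\<alpha>\<in>{0..1}. C i \<alpha> \<subseteq> Theta i) \<and>
        (\<forall>\<alpha>\<in>{0..1}. \<forall>\<beta>\<in>{0..1}. \<alpha> \<le> \<beta> \<longrightarrow> C i \<beta> \<subseteq> C i \<alpha>) \<and>
        (\<forall>\<alpha>\<in>{0..<1}. C i \<alpha> = (\<Union>\<beta>\<in>{\<alpha><..1}. C i \<beta>)))"

text \<open>The realized e-CI: C^E_i(alpha) = {theta in Theta_i : E_i(theta) < 1/alpha}, 1/0 = infinity.\<close>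
definition CE :: "(nat \<Rightarrow> 'a set) \<Rightarrow> (nat \<Rightarrow> 'a \<Rightarrow> 'w \<Rightarrow> real) \<Rightarrow> 'w \<Rightarrow> nat \<Rightarrow> real \<Rightarrow> 'a set" where
  "CE Theta E \<omega> i \<alpha> = {\<theta> \<in> Theta i. \<alpha> = 0 \<or> E i \<theta> \<omega> < 1 / \<alpha>}"

definition tfun :: "(nat \<Rightarrow> real \<Rightarrow> 'a set) \<Rightarrow> nat \<Rightarrow> 'a \<Rightarrow> ereal" where
  "tfun C i \<theta> =
     (let A = {\<alpha> \<in> {0..<1}. \<theta> \<notin> C i \<alpha>} in
      if A = {} then 1
      else Sup ((\<lambda>\<alpha>. if \<alpha> = 0 then \<infinity> else ereal (1 / \<alpha>)) ` A))"

definition gammaS :: "(nat \<Rightarrow> 'a set) \<Rightarrow> nat set \<Rightarrow> (nat \<Rightarrow> real \<Rightarrow> 'a set) \<Rightarrow> ereal" where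
  "gammaS Theta S C = (\<Sum>i\<in>S. (SUP \<theta>\<in>Theta i. tfun C i \<theta>))"

definition lambdaS :: "nat \<Rightarrow> (nat \<Rightarrow> 'a set) \<Rightarrow> nat set \<Rightarrow> (nat \<Rightarrow> real \<Rightarrow> 'a set) \<Rightarrow> ereal" where
  "lambdaS K Theta S C =
     (\<Sum>i\<in>{1..K} - S. (INF \<theta>\<in>Theta i. (if tfun C i \<theta> > 1 then tfun C i \<theta> else 0)))"

definition vS :: "nat \<Rightarrow> (nat \<Rightarrow> 'a set) \<Rightarrow> nat set \<Rightarrow> (nat \<Rightarrow> real \<Rightarrow> 'a set) \<Rightarrow> ereal" where
  "vS K Theta S C =
     (let l = lambdaS K Theta S C; g = gammaS Theta S C in
      1 + (if l = \<infinity> \<and> g = \<infinity> then 0 else l / g))"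

definition SigmaW :: "nat \<Rightarrow> (nat \<Rightarrow> 'a set) \<Rightarrow> real \<Rightarrow> (nat set \<times> (nat \<Rightarrow> real \<Rightarrow> 'a set)) set" where
  "SigmaW K Theta w =
     {(S, C). S \<subseteq> {1..K} \<and> ECI K Theta C \<and> S \<noteq> {} \<and> S \<noteq> {1..K} \<and> vS K Theta S C \<ge> ereal w}"

definition Phi :: "nat \<Rightarrow> (nat \<Rightarrow> 'a set) \<Rightarrow> real \<Rightarrow> real \<Rightarrow> nat set \<Rightarrow> (nat \<Rightarrow> real \<Rightarrow> 'a set) \<Rightarrow> nat \<Rightarrow> 'a set" where
  "Phi K Theta w \<delta> S C i =
     (if (S, C) \<in> SigmaW K Theta w then C i (w * \<delta> * real (card S) / real K)
      else C i (\<delta> * real (card S) / real K))"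

end

theory Submission
  imports Defs
begin

lemma CE_notin:
  assumes "t \<in> Theta i"
  shows "t \<notin> CE Theta E \<omega> i a \<longleftrightarrow> a \<noteq> 0 \<and> E i t \<omega> \<ge> 1 / a"
  using assms by (auto simp: CE_def)

lemma tfun_CE_ge1:
  assumes "t \<in> Theta i"
  shows "tfun (CE Theta E \<omega>) i t \<ge> 1"
proof -
  define A where "A = {\<alpha> \<in> {0..<1::real}. t \<notin> CE Theta E \<omega> i \<alpha>}"
  define f where "f = (\<lambda>\<alpha>::real. if \<alpha> = 0 then \<infinity> else ereal (1 / \<alpha>))"
  have "tfun (CE Theta E \<omega>) i t = (if A = {} then 1 else Sup (f ` A))"
    unfolding tfun_def Let_def by (simp only: A_def f_def)
  moreover have "Sup (f ` A) \<ge> 1" if ne: "A \<noteq> {}"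
  proof -
    obtain a where a: "a \<in> A" using ne by blast
    then have "a \<noteq> 0" "0 \<le> a" "a < 1" using assms by (auto simp: A_def CE_def)
    then have "f a \<ge> 1" by (simp add: f_def)
    also have "f a \<le> Sup (f ` A)" using a by (intro Sup_upper) auto
    finally show ?thesis .
  qed
  ultimately show ?thesis by auto
qed

lemma tfun_CE_ge:
  assumes "t \<in> Theta i"
  shows "tfun (CE Theta E \<omega>) i t \<ge> ereal (E i t \<omega>)"
proof (cases "E i t \<omega> > 1")
  case False
  then have "ereal (E i t \<omega>) \<le> 1" by simp
  also have "\<dots> \<le> tfun (CE Theta E \<omega>) i t" using tfun_CE_ge1[where t=t and Theta=Theta and i=i and E=E and \<omega>=\<omega>] assms by blast
  finally show ?thesis .
next
  case True
  define A where "A = {\<alpha> \<in> {0..<1::real}. t \<notin> CE Theta E \<omega> i \<alpha>}"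
  define f where "f = (\<lambda>\<alpha>::real. if \<alpha> = 0 then \<infinity> else ereal (1 / \<alpha>))"
  have a: "1 / E i t \<omega> \<in> A" using True assms by (auto simp: A_def CE_def)
  have "tfun (CE Theta E \<omega>) i t = Sup (f ` A)"
    using a unfolding tfun_def Let_def by (simp only: A_def f_def) auto
  moreover have "f (1 / E i t \<omega>) = ereal (E i t \<omega>)" using True by (simp add: f_def)
  moreover have "f (1 / E i t \<omega>) \<le> Sup (f ` A)" using a by (intro Sup_upper) auto
  ultimately show ?thesis by simp
qed

lemma tfun_CE_le:
  assumes "t \<in> Theta i" "tfun (CE Theta E \<omega>) i t > 1"
  shows "tfun (CE Theta E \<omega>) i t \<le> ereal (E i t \<omega>)"
proof -
  define A where "A = {\<alpha> \<in> {0..<1::real}. t \<notin> CE Theta E \<omega> i \<alpha>}"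
  define f where "f = (\<lambda>\<alpha>::real. if \<alpha> = 0 then \<infinity> else ereal (1 / \<alpha>))"
  have eq: "tfun (CE Theta E \<omega>) i t = (if A = {} then 1 else Sup (f ` A))"
    unfolding tfun_def Let_def by (simp only: A_def f_def)
  with assms have ne: "A \<noteq> {}" by (auto split: if_splits)
  have "Sup (f ` A) \<le> ereal (E i t \<omega>)"
  proof (rule Sup_least)
    fix x assume "x \<in> f ` A"
    then obtain a where a: "a \<in> A" "x = f a" by auto
    then have "a \<noteq> 0" "0 \<le> a" "E i t \<omega> \<ge> 1 / a" using assms by (auto simp: A_def CE_def)
    then show "x \<le> ereal (E i t \<omega>)" using a by (simp add: f_def)
  qed
  then show ?thesis using eq ne by simp
qed

lemma sigma_bound:
  assumes mem: "(S, CE Theta E \<omega>) \<in> SigmaW K Theta w"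
    and w: "w > 1" and th: "\<theta> \<in> Pi\<^sub>E {1..K} Theta"
    and nn: "\<forall>i\<in>{1..K}. E i (\<theta> i) \<omega> \<ge> 0"
  shows "w * (\<Sum>i\<in>S. E i (\<theta> i) \<omega>) \<le> (\<Sum>i\<in>{1..K}. E i (\<theta> i) \<omega>)"
proof -
  let ?C = "CE Theta E \<omega>"
  from mem have S: "S \<subseteq> {1..K}" "S \<noteq> {}" and v: "vS K Theta S ?C \<ge> ereal w"
    by (auto simp: SigmaW_def)
  have fin: "finite S" using S(1) finite_subset by blast
  have thi: "\<theta> i \<in> Theta i" if "i \<in> {1..K}" for i using th that by auto
  define g where "g = gammaS Theta S ?C"
  define l where "l = lambdaS K Theta S ?C"
  have g1: "g \<ge> (\<Sum>i\<in>S. tfun ?C i (\<theta> i))" unfolding g_def gammaS_def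
    by (intro sum_mono SUP_upper) (use S thi in auto)
  have "(\<Sum>i\<in>S. tfun ?C i (\<theta> i)) \<ge> (\<Sum>i\<in>S. ereal (E i (\<theta> i) \<omega>))"
    by (intro sum_mono tfun_CE_ge) (use S thi in auto)
  then have gE: "g \<ge> ereal (\<Sum>i\<in>S. E i (\<theta> i) \<omega>)" using g1 by (simp add: sum_ereal)
  have st1: "(\<Sum>i\<in>S. tfun ?C i (\<theta> i)) \<ge> (\<Sum>i\<in>S. 1)"
    by (intro sum_mono tfun_CE_ge1) (use S thi in auto)
  obtain j where "j \<in> S" using S(2) by blast
  then have "card S \<ge> 1" using fin by (auto simp: Suc_le_eq card_gt_0_iff)
  moreover have "(\<Sum>i\<in>S. (1::ereal)) = ereal (real (card S))" unfolding one_ereal_def sum_ereal by simp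
  ultimately have "(1::ereal) \<le> (\<Sum>i\<in>S. 1)" by simp
  then have gpos: "g \<ge> 1" using g1 st1 by (meson order_trans)
  have lE: "l \<le> ereal (\<Sum>i\<in>{1..K} - S. E i (\<theta> i) \<omega>)"
    unfolding l_def lambdaS_def sum_ereal[symmetric]
  proof (intro sum_mono)
    fix i assume i: "i \<in> {1..K} - S"
    have "(INF t\<in>Theta i. (if tfun ?C i t > 1 then tfun ?C i t else 0))
          \<le> (if tfun ?C i (\<theta> i) > 1 then tfun ?C i (\<theta> i) else 0)"
      using i thi by (intro INF_lower) auto
    also have "\<dots> \<le> ereal (E i (\<theta> i) \<omega>)"
      using tfun_CE_le[where t="\<theta> i" and Theta=Theta and i=i and E=E and \<omega>=\<omega>] thi[of i] i nn by auto
    finally show "(INF t\<in>Theta i. (if tfun ?C i t > 1 then tfun ?C i t else 0)) \<le> ereal (E i (\<theta> i) \<omega>)" .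
  qed
  have l0: "l \<ge> 0" unfolding l_def lambdaS_def
    by (intro sum_nonneg INF_greatest) (auto, metis dual_order.strict_trans2 less_imp_le zero_less_one_ereal order.refl)
  obtain L where L: "l = ereal L" using lE l0 by (cases l) auto
  have v2: "1 + l / g \<ge> ereal w" using v L by (simp add: vS_def g_def l_def Let_def)
  have "g \<noteq> \<infinity>"
  proof
    assume "g = \<infinity>"
    then have "l / g = 0" using L by simp
    then show False using v2 w by simp
  qed
  then obtain G where G: "g = ereal G" using gpos by (cases g) auto
  have G1: "G \<ge> 1" using gpos G by simp
  have "1 + L / G \<ge> w" using v2 L G G1 by simp
  then have "L \<ge> (w - 1) * G" using G1 by (simp add: field_simps)
  moreover have "G \<ge> (\<Sum>i\<in>S. E i (\<theta> i) \<omega>)" using gE G by simp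
  ultimately have "L \<ge> (w - 1) * (\<Sum>i\<in>S. E i (\<theta> i) \<omega>)" using w
    by (smt (verit) mult_left_mono)
  moreover have "L \<le> (\<Sum>i\<in>{1..K} - S. E i (\<theta> i) \<omega>)" using lE L by simp
  moreover have "(\<Sum>i\<in>{1..K}. E i (\<theta> i) \<omega>) = (\<Sum>i\<in>S. E i (\<theta> i) \<omega>) + (\<Sum>i\<in>{1..K} - S. E i (\<theta> i) \<omega>)"
    using S(1) by (simp add: sum.subset_diff)
  ultimately show ?thesis by (simp add: algebra_simps)
qed


lemma count_bound:
  assumes "\<forall>i\<in>S. \<theta> i \<in> Theta i" "a > 0" "\<forall>i\<in>S. E i (\<theta> i) \<omega> \<ge> 0"
  shows "(\<Sum>i\<in>S. if \<theta> i \<notin> CE Theta E \<omega> i a then 1 else 0) \<le> a * (\<Sum>i\<in>S. E i (\<theta> i) \<omega>)"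
  unfolding sum_distrib_left
proof (rule sum_mono)
  fix i assume i: "i \<in> S"
  show "(if \<theta> i \<notin> CE Theta E \<omega> i a then 1 else 0) \<le> a * E i (\<theta> i) \<omega>"
  proof (cases "E i (\<theta> i) \<omega> \<ge> 1 / a")
    case True
    then have "a * (1 / a) \<le> a * E i (\<theta> i) \<omega>" using assms by (intro mult_left_mono) auto
    then show ?thesis using assms by auto
  next
    case False
    then show ?thesis using assms i by (auto simp: CE_def)
  qed
qed

lemma pointwise:
  assumes S: "S \<subseteq> {1..K}"
    and th: "\<theta> \<in> Pi\<^sub>E {1..K} Theta"
    and nn: "\<forall>i\<in>{1..K}. E i (\<theta> i) \<omega> \<ge> 0"
    and w: "w > 1" and d: "0 < \<delta>"
  shows "(\<Sum>i\<in>S. if \<theta> i \<notin> Phi K Theta w \<delta> S (CE Theta E \<omega>) i then 1 else 0)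
             / max (real (card S)) 1 \<le> \<delta> / real K * (\<Sum>i\<in>{1..K}. E i (\<theta> i) \<omega>)"
proof (cases "S = {}")
  case True
  have "(\<Sum>i\<in>{1..K}. E i (\<theta> i) \<omega>) \<ge> 0" using nn by (intro sum_nonneg) auto
  then show ?thesis using True d by simp
next
  case False
  have fin: "finite S" using S finite_subset by blast
  then have cS: "card S > 0" using False by (simp add: card_gt_0_iff)
  have Kpos: "K > 0" using S False by auto
  have thi: "\<forall>i\<in>S. \<theta> i \<in> Theta i" using S th by auto
  have nnS: "\<forall>i\<in>S. E i (\<theta> i) \<omega> \<ge> 0" using S nn by auto
  define SE where "SE = (\<Sum>i\<in>S. E i (\<theta> i) \<omega>)"
  define AllE where "AllE = (\<Sum>i\<in>{1..K}. E i (\<theta> i) \<omega>)"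
  have SE0: "SE \<ge> 0" unfolding SE_def using nnS by (intro sum_nonneg) auto
  have SEAllE: "SE \<le> AllE" unfolding SE_def AllE_def using S nn
    by (intro sum_mono2) auto
  have mx: "max (real (card S)) 1 = real (card S)" using cS by simp
  show ?thesis
  proof (cases "(S, CE Theta E \<omega>) \<in> SigmaW K Theta w")
    case True
    define a where "a = w * \<delta> * real (card S) / real K"
    have a: "a > 0" using w d cS Kpos by (simp add: a_def)
    have "(\<Sum>i\<in>S. if \<theta> i \<notin> Phi K Theta w \<delta> S (CE Theta E \<omega>) i then 1 else 0)
        = (\<Sum>i\<in>S. if \<theta> i \<notin> CE Theta E \<omega> i a then 1 else 0)"
      using True by (simp add: Phi_def a_def)
    also have "\<dots> \<le> a * SE" unfolding SE_def using count_bound[where S=S and \<theta>=\<theta> and Theta=Theta and a=a and E=E and \<omega>=\<omega>] thi a nnS by blast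
    finally have c: "(\<Sum>i\<in>S. if \<theta> i \<notin> Phi K Theta w \<delta> S (CE Theta E \<omega>) i then 1 else 0) \<le> a * SE" .
    have wb: "w * SE \<le> AllE" unfolding SE_def AllE_def by (rule sigma_bound[OF True w th nn])
    have "a * SE / real (card S) = \<delta> / real K * (w * SE)" using cS by (simp add: a_def field_simps)
    also have "\<dots> \<le> \<delta> / real K * AllE" using wb d by (intro mult_left_mono) auto
    finally show ?thesis using c cS unfolding mx AllE_def[symmetric]
      by (meson divide_right_mono of_nat_0_le_iff order_trans)
  next
    case False
    define a where "a = \<delta> * real (card S) / real K"
    have a: "a > 0" using w d cS Kpos by (simp add: a_def)
    have "(\<Sum>i\<in>S. if \<theta> i \<notin> Phi K Theta w \<delta> S (CE Theta E \<omega>) i then 1 else 0)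
        = (\<Sum>i\<in>S. if \<theta> i \<notin> CE Theta E \<omega> i a then 1 else 0)"
      using False by (simp add: Phi_def a_def)
    also have "\<dots> \<le> a * SE" unfolding SE_def using count_bound[where S=S and \<theta>=\<theta> and Theta=Theta and a=a and E=E and \<omega>=\<omega>] thi a nnS by blast
    finally have c: "(\<Sum>i\<in>S. if \<theta> i \<notin> Phi K Theta w \<delta> S (CE Theta E \<omega>) i then 1 else 0) \<le> a * SE" .
    have "a * SE / real (card S) = \<delta> / real K * SE" using cS by (simp add: a_def field_simps)
    also have "\<dots> \<le> \<delta> / real K * AllE" using SEAllE d by (intro mult_left_mono) auto
    finally show ?thesis using c cS unfolding mx AllE_def[symmetric]
      by (meson divide_right_mono of_nat_0_le_iff order_trans)
  qed
qed

theorem proposition5: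
  fixes K :: nat
    and Theta :: "nat \<Rightarrow> 'a set"
    and P :: "(nat \<Rightarrow> 'a) \<Rightarrow> 'w measure"
    and E :: "nat \<Rightarrow> 'a \<Rightarrow> 'w \<Rightarrow> real"
    and Ssel :: "'w \<Rightarrow> nat set"
    and \<theta> :: "nat \<Rightarrow> 'a"
    and w \<delta> :: real
  assumes prob: "\<forall>th\<in>Pi\<^sub>E {1..K} Theta. prob_space (P th)"
    and unif: "\<exists>U::'w \<Rightarrow> real. \<forall>th\<in>Pi\<^sub>E {1..K} Theta.
                 U \<in> borel_measurable (P th) \<and>
                 distr (P th) lborel U = uniform_measure lborel {0..1}"
    and evalue: "\<forall>i\<in>{1..K}. \<forall>t\<in>Theta i. \<forall>th\<in>Pi\<^sub>E {1..K} Theta.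
                   E i t \<in> borel_measurable (P th) \<and>
                   (\<forall>\<omega>\<in>space (P th). E i t \<omega> \<ge> 0) \<and>
                   (th i = t \<longrightarrow> (\<integral>\<^sup>+\<omega>. ennreal (E i t \<omega>) \<partial>P th) \<le> 1)"
    and sel: "\<forall>th\<in>Pi\<^sub>E {1..K} Theta. Ssel \<in> measurable (P th) (count_space (Pow {1..K}))"
    and truth: "\<theta> \<in> Pi\<^sub>E {1..K} Theta"
    and w: "w > 1"
    and \<delta>: "0 < \<delta>" "\<delta> < 1"
  shows "(\<integral>\<^sup>+\<omega>. ennreal
            ((\<Sum>i\<in>Ssel \<omega>. if \<theta> i \<notin> Phi K Theta w \<delta> (Ssel \<omega>) (CE Theta E \<omega>) i then 1 else 0)
             / max (real (card (Ssel \<omega>))) 1) \<partial>P \<theta>) \<le> ennreal \<delta>"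
proof -
  let ?M = "P \<theta>"
  have thi: "\<theta> i \<in> Theta i" if "i \<in> {1..K}" for i using truth that by auto
  have Emeas: "E i (\<theta> i) \<in> borel_measurable ?M" if "i \<in> {1..K}" for i
    using evalue thi[OF that] truth that by blast
  have Enn: "\<forall>\<omega>\<in>space ?M. E i (\<theta> i) \<omega> \<ge> 0" if "i \<in> {1..K}" for i
    using evalue thi[OF that] truth that by blast
  have Eint: "(\<integral>\<^sup>+\<omega>. ennreal (E i (\<theta> i) \<omega>) \<partial>?M) \<le> 1" if "i \<in> {1..K}" for i
    using evalue thi[OF that] truth that by blast
  have Ssp: "Ssel \<omega> \<subseteq> {1..K}" if "\<omega> \<in> space ?M" for \<omega>
    using measurable_space[OF sel[rule_format, OF truth] that] by auto
  have d0: "\<delta> / real K \<ge> 0" using \<delta> by simp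
  have "(\<integral>\<^sup>+\<omega>. ennreal
            ((\<Sum>i\<in>Ssel \<omega>. if \<theta> i \<notin> Phi K Theta w \<delta> (Ssel \<omega>) (CE Theta E \<omega>) i then 1 else 0)
             / max (real (card (Ssel \<omega>))) 1) \<partial>?M)
      \<le> (\<integral>\<^sup>+\<omega>. ennreal (\<delta> / real K) * (\<Sum>i\<in>{1..K}. ennreal (E i (\<theta> i) \<omega>)) \<partial>?M)"
  proof (rule nn_integral_mono)
    fix \<omega> assume om: "\<omega> \<in> space ?M"
    have nn: "\<forall>i\<in>{1..K}. E i (\<theta> i) \<omega> \<ge> 0" using Enn om by blast
    have "(\<Sum>i\<in>{1..K}. ennreal (E i (\<theta> i) \<omega>)) = ennreal (\<Sum>i\<in>{1..K}. E i (\<theta> i) \<omega>)"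
      using nn by (intro sum_ennreal) auto
    moreover have "ennreal (\<delta> / real K) * ennreal (\<Sum>i\<in>{1..K}. E i (\<theta> i) \<omega>)
        = ennreal (\<delta> / real K * (\<Sum>i\<in>{1..K}. E i (\<theta> i) \<omega>))"
      using nn d0 by (intro ennreal_mult[symmetric]) (auto intro: sum_nonneg)
    moreover have "((\<Sum>i\<in>Ssel \<omega>. if \<theta> i \<notin> Phi K Theta w \<delta> (Ssel \<omega>) (CE Theta E \<omega>) i then 1 else 0)
             / max (real (card (Ssel \<omega>))) 1) \<le> \<delta> / real K * (\<Sum>i\<in>{1..K}. E i (\<theta> i) \<omega>)"
      using pointwise[where S="Ssel \<omega>" and K=K and \<theta>=\<theta> and Theta=Theta and E=E and \<omega>=\<omega> and w=w and \<delta>=\<delta>] Ssp[OF om] truth nn w \<delta>(1) by blast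
    ultimately show "ennreal ((\<Sum>i\<in>Ssel \<omega>. if \<theta> i \<notin> Phi K Theta w \<delta> (Ssel \<omega>) (CE Theta E \<omega>) i then 1 else 0)
             / max (real (card (Ssel \<omega>))) 1) \<le> ennreal (\<delta> / real K) * (\<Sum>i\<in>{1..K}. ennreal (E i (\<theta> i) \<omega>))"
      by (simp add: ennreal_leI)
  qed
  also have "\<dots> = ennreal (\<delta> / real K) * (\<Sum>i\<in>{1..K}. (\<integral>\<^sup>+\<omega>. ennreal (E i (\<theta> i) \<omega>) \<partial>?M))"
  proof -
    have m: "(\<lambda>\<omega>. ennreal (E i (\<theta> i) \<omega>)) \<in> borel_measurable ?M" if "i \<in> {1..K}" for i
      using measurable_compose[OF Emeas[OF that] measurable_ennreal] by (simp add: o_def)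
    have "(\<lambda>\<omega>. \<Sum>i\<in>{1..K}. ennreal (E i (\<theta> i) \<omega>)) \<in> borel_measurable ?M"
      using m by (intro borel_measurable_sum) auto
    moreover have "(\<integral>\<^sup>+\<omega>. (\<Sum>i\<in>{1..K}. ennreal (E i (\<theta> i) \<omega>)) \<partial>?M) = (\<Sum>i\<in>{1..K}. (\<integral>\<^sup>+\<omega>. ennreal (E i (\<theta> i) \<omega>) \<partial>?M))"
      by (rule nn_integral_sum) (use m in auto)
    ultimately show ?thesis by (simp add: nn_integral_cmult)
  qed
  also have "\<dots> \<le> ennreal (\<delta> / real K) * (\<Sum>i\<in>{1..K}. 1)"
    using Eint by (intro mult_left_mono sum_mono) auto
  also have "\<dots> = ennreal (\<delta> / real K * real K)"
    by (simp add: ennreal_of_nat_eq_real_of_nat ennreal_mult[symmetric] d0)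
  also have "\<dots> \<le> ennreal \<delta>"
    using \<delta> by (intro ennreal_leI) (cases "K = 0", auto)
  finally show ?thesis .
qed

end
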